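(* For every integer $g\geq 1$ there exist a connected graph $G$ and a connected spanning subgraph $H$ of $G$, both having $R_g$-cutsets, such that $\kappa_g(G)=1$ and $\kappa_g(H)=2$; in particular $\kappa_g(H)>\kappa_g(G)$. Concretely: let $X_1,X_2,Y_1,Y_2$ be four vertex-disjoint cliques, each with at least $g+1$ vertices, and let $u,v,w$ be three further vertices; $G$ is obtained by joining $u$ to every vertex of $X_1\cup X_2\cup Y_1\cup Y_2$, joining each of $v$ and $w$ to every vertex of $Y_1\cup Y_2$, and adding the edges $uv,uw$; $H$ is obtained from $G$ by deleting all edges inside $X_1$ and inside $X_2$, all edges between $u$ and $Y_1$, and the edges $uv,uw$.
   Context: All graphs are finite and simple. A set $S\subseteq V(G)$ is a cutset if $G-S$ is disconnected. For a non-negative integer $g$, a cutset $S$ is an $R_g$-cutset if every connected component of $G-S$ has at least $g+1$ vertices. If $G$ has at least one $R_g$-cutset, the $g$-extra connectivity $\kappa_g(G)$ is the minimum cardinality of an $R_g$-cutset of $G$. A spanning subgraph of $G$ is a subgraph with vertex set $V(G)$. *)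

theory Defs
  imports Main
begin

definition simple_graph :: "'a set \<Rightarrow> ('a \<times> 'a) set \<Rightarrow> bool" where
  "simple_graph V E \<longleftrightarrow> finite V \<and> E \<subseteq> V \<times> V \<and> sym E \<and> (\<forall>x. (x, x) \<notin> E)"

definition induced_edges :: "('a \<times> 'a) set \<Rightarrow> 'a set \<Rightarrow> ('a \<times> 'a) set" where
  "induced_edges E W = E \<inter> (W \<times> W)"

definition connected_graph :: "'a set \<Rightarrow> ('a \<times> 'a) set \<Rightarrow> bool" where
  "connected_graph V E \<longleftrightarrow> V \<noteq> {} \<and>
     (\<forall>x\<in>V. \<forall>y\<in>V. (x, y) \<in> (induced_edges E V)\<^sup>*)"

definition component_of :: "'a set \<Rightarrow> ('a \<times> 'a) set \<Rightarrow> 'a \<Rightarrow> 'a set" where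
  "component_of V E x = {y \<in> V. (x, y) \<in> (induced_edges E V)\<^sup>*}"

definition is_cutset :: "'a set \<Rightarrow> ('a \<times> 'a) set \<Rightarrow> 'a set \<Rightarrow> bool" where
  "is_cutset V E S \<longleftrightarrow> S \<subseteq> V \<and>
     (\<exists>x\<in>V - S. \<exists>y\<in>V - S. (x, y) \<notin> (induced_edges E (V - S))\<^sup>*)"

definition is_Rg_cutset :: "nat \<Rightarrow> 'a set \<Rightarrow> ('a \<times> 'a) set \<Rightarrow> 'a set \<Rightarrow> bool" where
  "is_Rg_cutset g V E S \<longleftrightarrow> is_cutset V E S \<and>
     (\<forall>x\<in>V - S. card (component_of (V - S) E x) \<ge> g + 1)"

definition has_Rg_cutset :: "nat \<Rightarrow> 'a set \<Rightarrow> ('a \<times> 'a) set \<Rightarrow> bool" where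
  "has_Rg_cutset g V E \<longleftrightarrow> (\<exists>S. is_Rg_cutset g V E S)"

text \<open>g-extra connectivity: minimum cardinality of an R_g-cutset (meaningful when
  one exists).\<close>
definition kappa_g :: "nat \<Rightarrow> 'a set \<Rightarrow> ('a \<times> 'a) set \<Rightarrow> nat" where
  "kappa_g g V E = (LEAST k. \<exists>S. is_Rg_cutset g V E S \<and> card S = k)"

definition spanning_subgraph :: "'a set \<Rightarrow> ('a \<times> 'a) set \<Rightarrow> ('a \<times> 'a) set \<Rightarrow> bool" where
  "spanning_subgraph V F E \<longleftrightarrow> simple_graph V F \<and> F \<subseteq> E"

definition clique_edges :: "'a set \<Rightarrow> ('a \<times> 'a) set" where
  "clique_edges A = {(a, b). a \<in> A \<and> b \<in> A \<and> a \<noteq> b}"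

definition join_edges :: "'a set \<Rightarrow> 'a set \<Rightarrow> ('a \<times> 'a) set" where
  "join_edges A B = A \<times> B \<union> B \<times> A"

end

theory Submission imports Defs begin

lemma closed_rt: "(x,y) \<in> R\<^sup>* \<Longrightarrow> x \<in> C \<Longrightarrow> (\<forall>a b. (a,b)\<in>R \<longrightarrow> a\<in>C \<longrightarrow> b\<in>C) \<Longrightarrow> y \<in> C"
  by (induction rule: rtrancl_induct) auto

lemma sym_induced: "sym E \<Longrightarrow> sym (induced_edges E W)"
  unfolding induced_edges_def sym_def by auto

lemma rt_sym: "sym R \<Longrightarrow> (a,b) \<in> R\<^sup>* \<Longrightarrow> (b,a) \<in> R\<^sup>*"
  using sym_rtrancl by (metis symD)

lemma ind_edge: "(a,b) \<in> E \<Longrightarrow> a \<in> W \<Longrightarrow> b \<in> W \<Longrightarrow> (a,b) \<in> (induced_edges E W)\<^sup>*"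
  unfolding induced_edges_def by auto



lemma card2_other: assumes "card A \<ge> 2" "S \<subseteq> {s}" shows "\<exists>a\<in>A. a \<notin> S"
proof (rule ccontr)
  assume "\<not> ?thesis" then have "A \<subseteq> {s}" using assms(2) by auto
  then have "card A \<le> 1" using card_mono[of "{s}" A] by simp
  with assms(1) show False by simp
qed


lemma hub: "sym R \<Longrightarrow> (\<forall>x\<in>W. (r,x)\<in>R\<^sup>*) \<Longrightarrow> x\<in>W \<Longrightarrow> y\<in>W \<Longrightarrow> (x,y)\<in>R\<^sup>*"
  by (meson rt_sym rtrancl_trans)

lemma comp_sub: "A \<subseteq> W \<Longrightarrow> \<forall>a\<in>A. (x,a)\<in>(induced_edges E W)\<^sup>* \<Longrightarrow> A \<subseteq> component_of W E x"
  unfolding component_of_def by blast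

lemma comp_card: "finite W \<Longrightarrow> A \<subseteq> component_of W E x \<Longrightarrow> card A \<le> card (component_of W E x)"
  by (rule card_mono) (auto simp: component_of_def)

lemma clique_reach: "\<forall>a\<in>A. \<forall>b\<in>A. a\<noteq>b \<longrightarrow> (a,b)\<in>E \<Longrightarrow> A \<subseteq> W \<Longrightarrow> x \<in> A \<Longrightarrow> a \<in> A \<Longrightarrow> (x,a)\<in>(induced_edges E W)\<^sup>*"
  by (cases "x = a") (auto intro: ind_edge)

lemma not_cut_empty: "connected_graph V E \<Longrightarrow> \<not> is_cutset V E {}"
  unfolding connected_graph_def is_cutset_def by auto

lemma clique_mem: "(a,b) \<in> clique_edges A \<longleftrightarrow> a \<in> A \<and> b \<in> A \<and> a \<noteq> b"
  unfolding clique_edges_def by simp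
lemma join_mem: "(a,b) \<in> join_edges A B \<longleftrightarrow> (a \<in> A \<and> b \<in> B) \<or> (a \<in> B \<and> b \<in> A)"
  unfolding join_edges_def by blast
lemma sym_clique: "sym (clique_edges A)" unfolding sym_def clique_mem by blast
lemma sym_join: "sym (join_edges A B)" unfolding sym_def join_mem by blast
lemma sym_Diff: "sym A \<Longrightarrow> sym B \<Longrightarrow> sym (B - A)" unfolding sym_def by blast

locale cons =
  fixes g :: nat and X1 X2 Y1 Y2 :: "'a set" and u v w :: 'a and V EG EH
  assumes g1: "g \<ge> 1" and cX1: "card X1 \<ge> g + 1" and cX2: "card X2 \<ge> g + 1"
   and cY1: "card Y1 \<ge> g + 1" and cY2: "card Y2 \<ge> g + 1"
   and d: "X1 \<inter> X2 = {}" "X1 \<inter> Y1 = {}" "X1 \<inter> Y2 = {}"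
       "X2 \<inter> Y1 = {}" "X2 \<inter> Y2 = {}" "Y1 \<inter> Y2 = {}"
   and uv: "u \<noteq> v" and uw: "u \<noteq> w" and vw: "v \<noteq> w"
   and uvw: "{u, v, w} \<inter> (X1 \<union> X2 \<union> Y1 \<union> Y2) = {}"
   and V_def: "V = X1 \<union> X2 \<union> Y1 \<union> Y2 \<union> {u, v, w}"
   and EG_def: "EG = clique_edges X1 \<union> clique_edges X2 \<union> clique_edges Y1 \<union> clique_edges Y2
            \<union> join_edges {u} (X1 \<union> X2 \<union> Y1 \<union> Y2)
            \<union> join_edges {v} (Y1 \<union> Y2) \<union> join_edges {w} (Y1 \<union> Y2)
            \<union> join_edges {u} {v, w}"
   and EH_def: "EH = EG - (clique_edges X1 \<union> clique_edges X2 \<union> join_edges {u} Y1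
                  \<union> join_edges {u} {v, w})"
begin

lemma fins: "finite X1" "finite X2" "finite Y1" "finite Y2" "finite V"
  using cX1 cX2 cY1 cY2 card.infinite V_def by fastforce+

lemma notin: "u \<notin> X1" "u \<notin> X2" "u \<notin> Y1" "u \<notin> Y2"
  "v \<notin> X1" "v \<notin> X2" "v \<notin> Y1" "v \<notin> Y2"
  "w \<notin> X1" "w \<notin> X2" "w \<notin> Y1" "w \<notin> Y2"
  using uvw by auto

lemma dj: "x \<in> X1 \<Longrightarrow> x \<notin> X2" "x \<in> X1 \<Longrightarrow> x \<notin> Y1" "x \<in> X1 \<Longrightarrow> x \<notin> Y2"
  "x \<in> X2 \<Longrightarrow> x \<notin> X1" "x \<in> X2 \<Longrightarrow> x \<notin> Y1" "x \<in> X2 \<Longrightarrow> x \<notin> Y2"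
  "x \<in> Y1 \<Longrightarrow> x \<notin> X1" "x \<in> Y1 \<Longrightarrow> x \<notin> X2" "x \<in> Y1 \<Longrightarrow> x \<notin> Y2"
  "x \<in> Y2 \<Longrightarrow> x \<notin> X1" "x \<in> Y2 \<Longrightarrow> x \<notin> X2" "x \<in> Y2 \<Longrightarrow> x \<notin> Y1"
  using d by auto

lemmas facts = notin dj uv uw vw uv[symmetric] uw[symmetric] vw[symmetric]

lemma EG_iff: "(a,b) \<in> EG \<longleftrightarrow>
   (a \<in> X1 \<and> b \<in> X1 \<and> a \<noteq> b) \<or> (a \<in> X2 \<and> b \<in> X2 \<and> a \<noteq> b) \<or>
   (a \<in> Y1 \<and> b \<in> Y1 \<and> a \<noteq> b) \<or> (a \<in> Y2 \<and> b \<in> Y2 \<and> a \<noteq> b) \<or>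
   (a = u \<and> b \<in> X1 \<union> X2 \<union> Y1 \<union> Y2) \<or> (a \<in> X1 \<union> X2 \<union> Y1 \<union> Y2 \<and> b = u) \<or>
   (a = v \<and> b \<in> Y1 \<union> Y2) \<or> (a \<in> Y1 \<union> Y2 \<and> b = v) \<or>
   (a = w \<and> b \<in> Y1 \<union> Y2) \<or> (a \<in> Y1 \<union> Y2 \<and> b = w) \<or>
   (a = u \<and> b \<in> {v,w}) \<or> (a \<in> {v,w} \<and> b = u)"
  unfolding EG_def Un_iff clique_mem join_mem singleton_iff by (simp only: disj_assoc)

lemma rem_iff: "(a,b) \<in> (clique_edges X1 \<union> clique_edges X2 \<union> join_edges {u} Y1
                  \<union> join_edges {u} {v, w}) \<longleftrightarrow> (a \<in> X1 \<and> b \<in> X1 \<and> a \<noteq> b) \<or> (a \<in> X2 \<and> b \<in> X2 \<and> a \<noteq> b)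
  \<or> (a = u \<and> b \<in> Y1) \<or> (a \<in> Y1 \<and> b = u) \<or> (a = u \<and> b \<in> {v,w}) \<or> (a \<in> {v,w} \<and> b = u)"
  unfolding Un_iff clique_mem join_mem singleton_iff by (simp only: disj_assoc)

lemma EH_sub: "EH \<subseteq> EG" unfolding EH_def by blast

lemma symG: "sym EG" unfolding EG_def by (intro sym_Un sym_clique sym_join)

lemma symH: "sym EH"
proof -
  have "sym (clique_edges X1 \<union> clique_edges X2 \<union> join_edges {u} Y1 \<union> join_edges {u} {v, w})"
    by (intro sym_Un sym_clique sym_join)
  then show ?thesis using symG unfolding EH_def by (rule sym_Diff)
qed

lemma inH: "(a,b) \<in> EG \<Longrightarrow> \<not> ((a \<in> X1 \<and> b \<in> X1 \<and> a \<noteq> b) \<or> (a \<in> X2 \<and> b \<in> X2 \<and> a \<noteq> b)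
  \<or> (a = u \<and> b \<in> Y1) \<or> (a \<in> Y1 \<and> b = u) \<or> (a = u \<and> b \<in> {v,w}) \<or> (a \<in> {v,w} \<and> b = u)) \<Longrightarrow> (a,b) \<in> EH"
  unfolding EH_def Diff_iff rem_iff by (rule conjI)

lemma H_u: assumes "x \<in> X1 \<union> X2 \<union> Y2" shows "(u,x) \<in> EH"
proof (rule inH)
  have x: "x \<noteq> u" "x \<notin> Y1" "x \<noteq> v" "x \<noteq> w" using assms notin d by blast+
  show "(u,x) \<in> EG" using assms unfolding EG_iff by blast
  show "\<not> ((u \<in> X1 \<and> x \<in> X1 \<and> u \<noteq> x) \<or> (u \<in> X2 \<and> x \<in> X2 \<and> u \<noteq> x)
  \<or> (u = u \<and> x \<in> Y1) \<or> (u \<in> Y1 \<and> x = u) \<or> (u = u \<and> x \<in> {v,w}) \<or> (u \<in> {v,w} \<and> x = u))"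
    using x notin by simp
qed

lemma H_v: assumes "y \<in> Y1 \<union> Y2" "z \<in> {v,w}" shows "(z,y) \<in> EH"
proof (rule inH)
  have x: "y \<noteq> u" "z \<noteq> u" "z \<notin> X1" "z \<notin> X2" using assms notin uv uw by auto
  show "(z,y) \<in> EG" using assms unfolding EG_iff by blast
  show "\<not> ((z \<in> X1 \<and> y \<in> X1 \<and> z \<noteq> y) \<or> (z \<in> X2 \<and> y \<in> X2 \<and> z \<noteq> y)
  \<or> (z = u \<and> y \<in> Y1) \<or> (z \<in> Y1 \<and> y = u) \<or> (z = u \<and> y \<in> {v,w}) \<or> (z \<in> {v,w} \<and> y = u))"
    using x by simp
qed

lemma H_Y1: assumes "y \<in> Y1" "y' \<in> Y1" "y \<noteq> y'" shows "(y,y') \<in> EH"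
proof (rule inH)
  have x: "y \<noteq> u" "y' \<noteq> u" "y \<notin> X1" "y \<notin> X2" using assms notin d by blast+
  show "(y,y') \<in> EG" using assms unfolding EG_iff by blast
  show "\<not> ((y \<in> X1 \<and> y' \<in> X1 \<and> y \<noteq> y') \<or> (y \<in> X2 \<and> y' \<in> X2 \<and> y \<noteq> y')
  \<or> (y = u \<and> y' \<in> Y1) \<or> (y \<in> Y1 \<and> y' = u) \<or> (y = u \<and> y' \<in> {v,w}) \<or> (y \<in> {v,w} \<and> y' = u))"
    using x by simp
qed

lemma H_Y2: assumes "y \<in> Y2" "y' \<in> Y2" "y \<noteq> y'" shows "(y,y') \<in> EH"
proof (rule inH)
  have x: "y \<noteq> u" "y' \<noteq> u" "y \<notin> X1" "y \<notin> X2" using assms notin d by blast+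
  show "(y,y') \<in> EG" using assms unfolding EG_iff by blast
  show "\<not> ((y \<in> X1 \<and> y' \<in> X1 \<and> y \<noteq> y') \<or> (y \<in> X2 \<and> y' \<in> X2 \<and> y \<noteq> y')
  \<or> (y = u \<and> y' \<in> Y1) \<or> (y \<in> Y1 \<and> y' = u) \<or> (y = u \<and> y' \<in> {v,w}) \<or> (y \<in> {v,w} \<and> y' = u))"
    using x by simp
qed

lemma H_X: assumes "x \<in> X1 \<union> X2" "(x,b) \<in> EH" shows "b = u"
proof -
  have e: "(x,b) \<in> EG" and r: "\<not> ((x \<in> X1 \<and> b \<in> X1 \<and> x \<noteq> b) \<or> (x \<in> X2 \<and> b \<in> X2 \<and> x \<noteq> b)
  \<or> (x = u \<and> b \<in> Y1) \<or> (x \<in> Y1 \<and> b = u) \<or> (x = u \<and> b \<in> {v,w}) \<or> (x \<in> {v,w} \<and> b = u))"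
    using assms(2) unfolding EH_def rem_iff[symmetric] by auto
  have x: "x \<noteq> u" "x \<noteq> v" "x \<noteq> w" "x \<notin> Y1" "x \<notin> Y2" using assms(1) notin d by blast+
  show ?thesis using e r x assms(1) unfolding EG_iff by blast
qed

lemma H_Y1_out: assumes "y \<in> Y1" "(y,b) \<in> EH" shows "b \<in> Y1 \<union> {v,w}"
proof -
  have e: "(y,b) \<in> EG" and r: "\<not> ((y \<in> X1 \<and> b \<in> X1 \<and> y \<noteq> b) \<or> (y \<in> X2 \<and> b \<in> X2 \<and> y \<noteq> b)
  \<or> (y = u \<and> b \<in> Y1) \<or> (y \<in> Y1 \<and> b = u) \<or> (y = u \<and> b \<in> {v,w}) \<or> (y \<in> {v,w} \<and> b = u))"
    using assms(2) unfolding EH_def rem_iff[symmetric] by auto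
  have x: "y \<noteq> u" "y \<noteq> v" "y \<noteq> w" "y \<notin> X1" "y \<notin> X2" "y \<notin> Y2" using assms(1) notin d by blast+
  show ?thesis using e r x assms(1) unfolding EG_iff by blast
qed

lemma G_X1_out: assumes "x \<in> X1" "(x,b) \<in> EG" shows "b \<in> X1 \<union> {u}"
proof -
  have x: "x \<noteq> u" "x \<noteq> v" "x \<noteq> w" "x \<notin> Y1" "x \<notin> Y2" "x \<notin> X2" using assms(1) notin d by blast+
  show ?thesis using assms x unfolding EG_iff by blast
qed

lemma G_u: "x \<in> V \<Longrightarrow> x \<noteq> u \<Longrightarrow> (u,x) \<in> EG"
  unfolding EG_iff V_def by blast

lemma G_X1: "x \<in> X1 \<Longrightarrow> x' \<in> X1 \<Longrightarrow> x \<noteq> x' \<Longrightarrow> (x,x') \<in> EG"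
  unfolding EG_iff by blast
lemma G_X2: "x \<in> X2 \<Longrightarrow> x' \<in> X2 \<Longrightarrow> x \<noteq> x' \<Longrightarrow> (x,x') \<in> EG"
  unfolding EG_iff by blast
lemma G_Y1: "x \<in> Y1 \<Longrightarrow> x' \<in> Y1 \<Longrightarrow> x \<noteq> x' \<Longrightarrow> (x,x') \<in> EG"
  unfolding EG_iff by blast
lemma G_Y2: "x \<in> Y2 \<Longrightarrow> x' \<in> Y2 \<Longrightarrow> x \<noteq> x' \<Longrightarrow> (x,x') \<in> EG"
  unfolding EG_iff by blast
lemma G_vY: "y \<in> Y1 \<union> Y2 \<Longrightarrow> z \<in> {v,w} \<Longrightarrow> (z,y) \<in> EG"
  unfolding EG_iff by blast

lemma EG_sub: "EG \<subseteq> V \<times> V"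
  unfolding EG_def V_def clique_edges_def join_edges_def by blast

lemma irrG: "(x,x) \<notin> EG"
proof
  assume "(x,x) \<in> EG"
  then show False unfolding EG_iff using notin uv uw by blast
qed

lemma simpleG: "simple_graph V EG"
  unfolding simple_graph_def using fins(5) symG EG_sub irrG by blast

lemma spanH: "spanning_subgraph V EH EG"
  unfolding spanning_subgraph_def simple_graph_def using fins(5) symH EH_sub EG_sub irrG by blast

lemma ne: "X1 \<noteq> {}" "X2 \<noteq> {}" "Y1 \<noteq> {}" "Y2 \<noteq> {}"
  using cX1 cX2 cY1 cY2 by auto

lemma c2: "card Y2 \<ge> 2" "card Y1 \<ge> 2" using cY1 cY2 g1 by auto

lemma inV: "u \<in> V" "v \<in> V" "w \<in> V" "X1 \<subseteq> V" "X2 \<subseteq> V" "Y1 \<subseteq> V" "Y2 \<subseteq> V"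
  unfolding V_def by auto

lemma connG: "connected_graph V EG"
proof -
  have "\<forall>x\<in>V. (u,x) \<in> (induced_edges EG V)\<^sup>*"
  proof
    fix x assume "x \<in> V"
    then show "(u,x) \<in> (induced_edges EG V)\<^sup>*"
      by (cases "x = u") (auto intro: ind_edge G_u inV)
  qed
  then show ?thesis unfolding connected_graph_def
    using hub[OF sym_induced[OF symG]] inV by blast
qed

lemma reachH: assumes "s \<noteq> u" "S \<subseteq> {s}" "x \<in> V - S"
  shows "(u,x) \<in> (induced_edges EH (V-S))\<^sup>*"
proof -
  let ?R = "induced_edges EH (V-S)"
  have uW: "u \<in> V - S" using assms(1,2) inV(1) by blast
  obtain y2 where y2: "y2 \<in> Y2" "y2 \<notin> S" using card2_other[OF c2(1) assms(2)] by blast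
  have y2W: "y2 \<in> V - S" using y2 inV(7) by blast
  have "(u,y2) \<in> EH" using H_u y2(1) by blast
  then have uy2: "(u,y2) \<in> ?R\<^sup>*" using uW y2W by (rule ind_edge)
  have z: "(u,z) \<in> ?R\<^sup>*" if zz: "z \<in> {v,w}" "z \<notin> S" for z
  proof -
    have "(z,y2) \<in> EH" using H_v y2(1) zz(1) by blast
    then have "(y2,z) \<in> EH" by (rule symD[OF symH])
    moreover have zW: "z \<in> V - S" using zz inV(2,3) by blast
    ultimately have "(y2,z) \<in> ?R\<^sup>*" using y2W by (intro ind_edge)
    then show ?thesis using uy2 by (rule rtrancl_trans[rotated])
  qed
  show ?thesis
  proof (cases "x \<in> X1 \<union> X2 \<union> Y2")
    case True
    then have "(u,x) \<in> EH" by (rule H_u)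
    then show ?thesis using uW assms(3) by (rule ind_edge)
  next
    case False
    then have c: "x = u \<or> x \<in> {v,w} \<or> x \<in> Y1" using assms(3) unfolding V_def by blast
    show ?thesis
    proof (cases "x \<in> Y1")
      case x: True
      obtain z where zz: "z \<in> {v,w}" "z \<notin> S" using assms(2) vw by blast
      have "(z,x) \<in> EH" using H_v x zz(1) by blast
      moreover have "z \<in> V - S" using zz inV(2,3) by blast
      ultimately have "(z,x) \<in> ?R\<^sup>*" using assms(3) by (intro ind_edge)
      then show ?thesis using z[OF zz] by (rule rtrancl_trans[rotated])
    next
      case False
      then have "x = u \<or> (x \<in> {v,w} \<and> x \<notin> S)" using c assms(3) by blast
      then show ?thesis using z by blast
    qed
  qed
qed

lemma connH: "connected_graph V EH"
proof -
  have "\<forall>x\<in>V. (u,x) \<in> (induced_edges EH V)\<^sup>*" using reachH[of v "{}"] uv by auto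
  then show ?thesis unfolding connected_graph_def
    using hub[OF sym_induced[OF symH]] inV by blast
qed

lemma cutG: "is_Rg_cutset g V EG {u}"
proof -
  let ?W = "V - {u}" let ?R = "induced_edges EG ?W"
  have fW: "finite ?W" using fins(5) by blast
  obtain x where x: "x \<in> X1" using ne(1) by blast
  obtain y where y: "y \<in> Y1" using ne(3) by blast
  have clos: "\<forall>a b. (a,b) \<in> ?R \<longrightarrow> a \<in> X1 \<longrightarrow> b \<in> X1"
  proof (intro allI impI)
    fix a b assume ab: "(a,b) \<in> ?R" "a \<in> X1"
    then have "(a,b) \<in> EG" "b \<noteq> u" unfolding induced_edges_def by blast+
    then show "b \<in> X1" using G_X1_out ab(2) by blast
  qed
  have "(x,y) \<notin> ?R\<^sup>*"
  proof
    assume "(x,y) \<in> ?R\<^sup>*"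
    then have "y \<in> X1" using x clos by (rule closed_rt)
    then show False using y d(2) by blast
  qed
  moreover have "x \<in> ?W" "y \<in> ?W" using x y inV notin by blast+
  ultimately have cut: "is_cutset V EG {u}" unfolding is_cutset_def using inV(1) by blast
  have "card (component_of ?W EG z) \<ge> g + 1" if z: "z \<in> ?W" for z
  proof -
    have "z \<in> X1 \<or> z \<in> X2 \<or> z \<in> Y1 \<union> Y2 \<union> {v,w}" using z unfolding V_def by blast
    moreover
    { assume zX: "z \<in> X1"
      have XW: "X1 \<subseteq> ?W" using inV(4) notin(1) by blast
      have "\<forall>a\<in>X1. \<forall>b\<in>X1. a\<noteq>b \<longrightarrow> (a,b)\<in>EG" using G_X1 by blast
      then have "\<forall>a\<in>X1. (z,a) \<in> ?R\<^sup>*" using clique_reach[of X1 EG ?W z] XW zX by blast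
      then have "X1 \<subseteq> component_of ?W EG z" using XW by (intro comp_sub)
      then have "card X1 \<le> card (component_of ?W EG z)" using fW by (intro comp_card)
      then have ?thesis using cX1 by linarith }
    moreover
    { assume zX: "z \<in> X2"
      have XW: "X2 \<subseteq> ?W" using inV(5) notin(2) by blast
      have "\<forall>a\<in>X2. \<forall>b\<in>X2. a\<noteq>b \<longrightarrow> (a,b)\<in>EG" using G_X2 by blast
      then have "\<forall>a\<in>X2. (z,a) \<in> ?R\<^sup>*" using clique_reach[of X2 EG ?W z] XW zX by blast
      then have "X2 \<subseteq> component_of ?W EG z" using XW by (intro comp_sub)
      then have "card X2 \<le> card (component_of ?W EG z)" using fW by (intro comp_card)
      then have ?thesis using cX2 by linarith }
    moreover
    { assume zz: "z \<in> Y1 \<union> Y2 \<union> {v,w}"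
      have Y1W: "Y1 \<subseteq> ?W" using inV(6) notin(3) by blast
      have vW: "v \<in> ?W" "w \<in> ?W" using inV(2,3) uv uw by blast+
      obtain y1 where y1: "y1 \<in> Y1" using ne(3) by blast
      have y1W: "y1 \<in> ?W" using y1 Y1W by blast
      have zv: "(z,v) \<in> ?R\<^sup>*"
      proof -
        have "z = v \<or> z = w \<or> z \<in> Y1 \<union> Y2" using zz by blast
        moreover have "(w,v) \<in> ?R\<^sup>*"
        proof -
          have "(w,y1) \<in> EG" using G_vY y1 by blast
          then have 1: "(w,y1) \<in> ?R\<^sup>*" using vW(2) y1W by (rule ind_edge)
          have "(v,y1) \<in> EG" using G_vY y1 by blast
          then have "(y1,v) \<in> EG" by (rule symD[OF symG])
          then have 2: "(y1,v) \<in> ?R\<^sup>*" using y1W vW(1) by (rule ind_edge)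
          from 1 2 show ?thesis by (rule rtrancl_trans)
        qed
        moreover have "(z,v) \<in> ?R\<^sup>*" if zY: "z \<in> Y1 \<union> Y2"
        proof -
          have "(v,z) \<in> EG" using G_vY zY by blast
          then have "(z,v) \<in> EG" by (rule symD[OF symG])
          then show ?thesis using z vW(1) by (rule ind_edge)
        qed
        ultimately show ?thesis by blast
      qed
      have "\<forall>a\<in>Y1. (z,a) \<in> ?R\<^sup>*"
      proof
        fix a assume a: "a \<in> Y1"
        have "(v,a) \<in> EG" using G_vY a by blast
        then have "(v,a) \<in> ?R\<^sup>*" using vW(1) a Y1W by (intro ind_edge) blast+
        with zv show "(z,a) \<in> ?R\<^sup>*" by (rule rtrancl_trans)
      qed
      then have "Y1 \<subseteq> component_of ?W EG z" using Y1W by (intro comp_sub)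
      then have "card Y1 \<le> card (component_of ?W EG z)" using fW by (intro comp_card)
      then have ?thesis using cY1 by linarith }
    ultimately show ?thesis by blast
  qed
  then show ?thesis unfolding is_Rg_cutset_def using cut by blast
qed

lemma cutH: "is_Rg_cutset g V EH {v,w}"
proof -
  let ?W = "V - {v,w}" let ?R = "induced_edges EH ?W"
  have fW: "finite ?W" using fins(5) by blast
  obtain y where y: "y \<in> Y1" using ne(3) by blast
  have clos: "\<forall>a b. (a,b) \<in> ?R \<longrightarrow> a \<in> Y1 \<longrightarrow> b \<in> Y1"
  proof (intro allI impI)
    fix a b assume ab: "(a,b) \<in> ?R" "a \<in> Y1"
    then have "(a,b) \<in> EH" "b \<noteq> v" "b \<noteq> w" unfolding induced_edges_def by blast+
    then show "b \<in> Y1" using H_Y1_out ab(2) by blast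
  qed
  have "(y,u) \<notin> ?R\<^sup>*"
  proof
    assume "(y,u) \<in> ?R\<^sup>*"
    then have "u \<in> Y1" using y clos by (rule closed_rt)
    then show False using notin(3) by blast
  qed
  moreover have "y \<in> ?W" "u \<in> ?W" using y inV notin uv uw by blast+
  ultimately have cut: "is_cutset V EH {v,w}" unfolding is_cutset_def using inV(2,3) by blast
  have Y1W: "Y1 \<subseteq> ?W" "Y2 \<subseteq> ?W" and uW: "u \<in> ?W" using inV notin uv uw by blast+
  have "card (component_of ?W EH z) \<ge> g + 1" if z: "z \<in> ?W" for z
  proof -
    have "z \<in> Y1 \<or> z \<in> {u} \<union> X1 \<union> X2 \<union> Y2" using z unfolding V_def by blast
    moreover
    { assume zY: "z \<in> Y1"
      have "\<forall>a\<in>Y1. \<forall>b\<in>Y1. a\<noteq>b \<longrightarrow> (a,b)\<in>EH" using H_Y1 by blast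
      then have "\<forall>a\<in>Y1. (z,a) \<in> ?R\<^sup>*" using clique_reach[of Y1 EH ?W z] Y1W(1) zY by blast
      then have "Y1 \<subseteq> component_of ?W EH z" using Y1W(1) by (intro comp_sub)
      then have "card Y1 \<le> card (component_of ?W EH z)" using fW by (intro comp_card)
      then have ?thesis using cY1 by linarith }
    moreover
    { assume zz: "z \<in> {u} \<union> X1 \<union> X2 \<union> Y2"
      have zu: "(z,u) \<in> ?R\<^sup>*"
      proof (cases "z = u")
        case False
        then have "z \<in> X1 \<union> X2 \<union> Y2" using zz by blast
        then have "(u,z) \<in> EH" by (rule H_u)
        then have "(z,u) \<in> EH" by (rule symD[OF symH])
        then show ?thesis using z uW by (rule ind_edge)
      qed simp
      have "\<forall>a\<in>Y2. (z,a) \<in> ?R\<^sup>*"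
      proof
        fix a assume a: "a \<in> Y2"
        then have "(u,a) \<in> EH" using H_u by blast
        then have "(u,a) \<in> ?R\<^sup>*" using uW a Y1W(2) by (intro ind_edge) blast+
        with zu show "(z,a) \<in> ?R\<^sup>*" by (rule rtrancl_trans)
      qed
      then have "Y2 \<subseteq> component_of ?W EH z" using Y1W(2) by (intro comp_sub)
      then have "card Y2 \<le> card (component_of ?W EH z)" using fW by (intro comp_card)
      then have ?thesis using cY2 by linarith }
    ultimately show ?thesis by blast
  qed
  then show ?thesis unfolding is_Rg_cutset_def using cut by blast
qed

lemma kG: "kappa_g g V EG = 1"
  unfolding kappa_g_def
proof (rule Least_equality)
  show "\<exists>S. is_Rg_cutset g V EG S \<and> card S = 1" using cutG by force
next
  fix k assume "\<exists>S. is_Rg_cutset g V EG S \<and> card S = k"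
  then obtain S where S: "is_Rg_cutset g V EG S" "card S = k" by blast
  have "S \<noteq> {}" using S not_cut_empty[OF connG] unfolding is_Rg_cutset_def by blast
  moreover have "finite S" using S fins(5) unfolding is_Rg_cutset_def is_cutset_def
    using finite_subset by blast
  ultimately have "card S > 0" by (simp add: card_gt_0_iff)
  then show "1 \<le> k" using S(2) by simp
qed

lemma kH: "kappa_g g V EH = 2"
  unfolding kappa_g_def
proof (rule Least_equality)
  show "\<exists>S. is_Rg_cutset g V EH S \<and> card S = 2" using cutH vw by (intro exI[of _ "{v,w}"]) simp
next
  fix k assume "\<exists>S. is_Rg_cutset g V EH S \<and> card S = k"
  then obtain S where S: "is_Rg_cutset g V EH S" "card S = k" by blast
  show "2 \<le> k"
  proof (rule ccontr)
    assume "\<not> 2 \<le> k"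
    then have "k = 0 \<or> k = 1" by auto
    moreover have "finite S" using S fins(5) unfolding is_Rg_cutset_def is_cutset_def
      using finite_subset by blast
    ultimately have "\<exists>s. S \<subseteq> {s}" using S(2) by (auto simp: card_1_singleton_iff)
    then obtain s where Ss: "S \<subseteq> {s}" by blast
    show False
    proof (cases "s = u")
      case False
      have re: "\<forall>x\<in>V-S. (u,x) \<in> (induced_edges EH (V-S))\<^sup>*" using reachH[OF False Ss] by blast
      have "\<forall>x\<in>V-S. \<forall>y\<in>V-S. (x,y) \<in> (induced_edges EH (V-S))\<^sup>*"
        using hub[OF sym_induced[OF symH] re] by blast
      then show False using S(1) unfolding is_Rg_cutset_def is_cutset_def by blast
    next
      case True
      have "S \<noteq> {}" using S not_cut_empty[OF connH] unfolding is_Rg_cutset_def by blast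
      then have Su: "S = {u}" using Ss True by blast
      obtain x where x: "x \<in> X1" using ne(1) by blast
      have xW: "x \<in> V - S" using x Su inV(4) notin(1) by blast
      have clos: "\<forall>a b. (a,b) \<in> induced_edges EH (V-S) \<longrightarrow> a \<in> {x} \<longrightarrow> b \<in> {x}"
      proof (intro allI impI)
        fix a b assume ab: "(a,b) \<in> induced_edges EH (V-S)" "a \<in> {x}"
        then have "(a,b) \<in> EH" "b \<noteq> u" "a = x" using Su unfolding induced_edges_def by blast+
        then show "b \<in> {x}" using H_X x by blast
      qed
      have "component_of (V-S) EH x \<subseteq> {x}"
      proof
        fix y assume "y \<in> component_of (V-S) EH x"
        then have "(x,y) \<in> (induced_edges EH (V-S))\<^sup>*" unfolding component_of_def by blast
        then show "y \<in> {x}" by (rule closed_rt[OF _ _ clos]) simp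
      qed
      then have "card (component_of (V-S) EH x) \<le> 1" using card_mono[of "{x}"] by simp
      moreover have "card (component_of (V-S) EH x) \<ge> g + 1" using S(1) xW unfolding is_Rg_cutset_def by blast
      ultimately show False using g1 by simp
    qed
  qed
qed

lemma all: "simple_graph V EG \<and> connected_graph V EG \<and>
       spanning_subgraph V EH EG \<and> connected_graph V EH \<and>
       has_Rg_cutset g V EG \<and> has_Rg_cutset g V EH \<and>
       kappa_g g V EG = 1 \<and> kappa_g g V EH = 2"
  using simpleG connG spanH connH cutG cutH kG kH unfolding has_Rg_cutset_def by blast

end

lemma gen:
  fixes X1 :: "'a set"
  assumes "g \<ge> 1" and h: "card X1 \<ge> g + 1 \<and> card X2 \<ge> g + 1 \<and> card Y1 \<ge> g + 1 \<and> card Y2 \<ge> g + 1 \<and>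
       X1 \<inter> X2 = {} \<and> X1 \<inter> Y1 = {} \<and> X1 \<inter> Y2 = {} \<and>
       X2 \<inter> Y1 = {} \<and> X2 \<inter> Y2 = {} \<and> Y1 \<inter> Y2 = {} \<and>
       u \<noteq> v \<and> u \<noteq> w \<and> v \<noteq> w \<and>
       {u, v, w} \<inter> (X1 \<union> X2 \<union> Y1 \<union> Y2) = {} \<and>
       V = X1 \<union> X2 \<union> Y1 \<union> Y2 \<union> {u, v, w} \<and>
       EG = clique_edges X1 \<union> clique_edges X2 \<union> clique_edges Y1 \<union> clique_edges Y2
            \<union> join_edges {u} (X1 \<union> X2 \<union> Y1 \<union> Y2)
            \<union> join_edges {v} (Y1 \<union> Y2) \<union> join_edges {w} (Y1 \<union> Y2)
            \<union> join_edges {u} {v, w} \<and>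
       EH = EG - (clique_edges X1 \<union> clique_edges X2 \<union> join_edges {u} Y1
                  \<union> join_edges {u} {v, w})"
  shows "simple_graph V EG \<and> connected_graph V EG \<and>
       spanning_subgraph V EH EG \<and> connected_graph V EH \<and>
       has_Rg_cutset g V EG \<and> has_Rg_cutset g V EH \<and>
       kappa_g g V EG = 1 \<and> kappa_g g V EH = 2"
  apply (rule cons.all)
  unfolding cons_def using assms by (elim conjE) (intro conjI; assumption)

theorem mainTheorem2:
  fixes g :: nat
  assumes "g \<ge> 1"
  shows
   "(\<exists>(V :: nat set) EG EH.
       simple_graph V EG \<and> connected_graph V EG \<and>
       spanning_subgraph V EH EG \<and> connected_graph V EH \<and>
       has_Rg_cutset g V EG \<and> has_Rg_cutset g V EH \<and>
       kappa_g g V EG = 1 \<and> kappa_g g V EH = 2 \<and> kappa_g g V EH > kappa_g g V EG)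
    \<and>
    (\<forall>(X1 :: 'a set) X2 Y1 Y2 u v w V EG EH.
       card X1 \<ge> g + 1 \<and> card X2 \<ge> g + 1 \<and> card Y1 \<ge> g + 1 \<and> card Y2 \<ge> g + 1 \<and>
       X1 \<inter> X2 = {} \<and> X1 \<inter> Y1 = {} \<and> X1 \<inter> Y2 = {} \<and>
       X2 \<inter> Y1 = {} \<and> X2 \<inter> Y2 = {} \<and> Y1 \<inter> Y2 = {} \<and>
       u \<noteq> v \<and> u \<noteq> w \<and> v \<noteq> w \<and>
       {u, v, w} \<inter> (X1 \<union> X2 \<union> Y1 \<union> Y2) = {} \<and>
       V = X1 \<union> X2 \<union> Y1 \<union> Y2 \<union> {u, v, w} \<and>
       EG = clique_edges X1 \<union> clique_edges X2 \<union> clique_edges Y1 \<union> clique_edges Y2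
            \<union> join_edges {u} (X1 \<union> X2 \<union> Y1 \<union> Y2)
            \<union> join_edges {v} (Y1 \<union> Y2) \<union> join_edges {w} (Y1 \<union> Y2)
            \<union> join_edges {u} {v, w} \<and>
       EH = EG - (clique_edges X1 \<union> clique_edges X2 \<union> join_edges {u} Y1
                  \<union> join_edges {u} {v, w})
     \<longrightarrow>
       simple_graph V EG \<and> connected_graph V EG \<and>
       spanning_subgraph V EH EG \<and> connected_graph V EH \<and>
       has_Rg_cutset g V EG \<and> has_Rg_cutset g V EH \<and>
       kappa_g g V EG = 1 \<and> kappa_g g V EH = 2)"
  apply (rule conjI)
  subgoal proof -
  let ?n = "g + 1"
  define X1 :: "nat set" where "X1 = {0..<?n}"
  define X2 :: "nat set" where "X2 = {?n..<2*?n}"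
  define Y1 :: "nat set" where "Y1 = {2*?n..<3*?n}"
  define Y2 :: "nat set" where "Y2 = {3*?n..<4*?n}"
  define u :: nat where "u = 4*?n"
  define v :: nat where "v = 4*?n+1"
  define w :: nat where "w = 4*?n+2"
  define V where "V = X1 \<union> X2 \<union> Y1 \<union> Y2 \<union> {u, v, w}"
  define EG where "EG = clique_edges X1 \<union> clique_edges X2 \<union> clique_edges Y1 \<union> clique_edges Y2
            \<union> join_edges {u} (X1 \<union> X2 \<union> Y1 \<union> Y2)
            \<union> join_edges {v} (Y1 \<union> Y2) \<union> join_edges {w} (Y1 \<union> Y2)
            \<union> join_edges {u} {v, w}"
  define EH where "EH = EG - (clique_edges X1 \<union> clique_edges X2 \<union> join_edges {u} Y1
                  \<union> join_edges {u} {v, w})"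
  have c: "card X1 \<ge> g + 1" "card X2 \<ge> g + 1" "card Y1 \<ge> g + 1" "card Y2 \<ge> g + 1"
    unfolding X1_def X2_def Y1_def Y2_def by (simp_all add: algebra_simps)
  have d1: "X1 \<inter> X2 = {}" "X1 \<inter> Y1 = {}" "X1 \<inter> Y2 = {}"
       "X2 \<inter> Y1 = {}" "X2 \<inter> Y2 = {}" "Y1 \<inter> Y2 = {}"
    unfolding X1_def X2_def Y1_def Y2_def by auto
  have d2: "u \<noteq> v" "u \<noteq> w" "v \<noteq> w" unfolding u_def v_def w_def by auto
  have d3: "{u, v, w} \<inter> (X1 \<union> X2 \<union> Y1 \<union> Y2) = {}"
    unfolding X1_def X2_def Y1_def Y2_def u_def v_def w_def by auto
  have R: "simple_graph V EG \<and> connected_graph V EG \<and>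
       spanning_subgraph V EH EG \<and> connected_graph V EH \<and>
       has_Rg_cutset g V EG \<and> has_Rg_cutset g V EH \<and>
       kappa_g g V EG = 1 \<and> kappa_g g V EH = 2"
    apply (rule gen[OF assms, of X1 X2 Y1 Y2 u v w V EG EH])
    by (intro conjI c d1 d2 d3 V_def EG_def EH_def)
  have kp: "kappa_g g V EH > kappa_g g V EG" using R by simp
  show ?thesis
    apply (rule exI[of _ V], rule exI[of _ EG], rule exI[of _ EH])
    using R kp by (simp only: simp_thms)
  qed
  apply (intro allI impI)
  apply (rule gen[OF assms])
  apply assumption
  done

end
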